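(* Let $\mathbb{X}\subset\mathbb{R}^n$ be a Lebesgue-measurable compact set and let $f:\mathbb{R}^n\to\mathbb{R}$ be positive homogeneous with $f|_{\mathbb{X}}$ Lebesgue integrable. Then for every $\epsilon>0$ there exists a finite-depth HomoMLP $\mathcal{A}'$ with ReLU activations and width at most $2(n+4)$, representing a function $F_{\mathcal{A}'}:\mathbb{R}^n\to\mathbb{R}$, such that $\int_{\mathbb{X}}|f(x)-F_{\mathcal{A}'}(x)|\,dx<\epsilon$.
   Context: A function $g$ is positive homogeneous iff $g(\lambda x)=\lambda g(x)$ for all $x$ and all $\lambda>0$. A HomoMLP is a multilayer perceptron without bias terms whose activation functions are positive homogeneous, i.e. a function of the form $x\mapsto W_L\,\sigma(W_{L-1}\,\sigma(\cdots\sigma(W_1x)\cdots))$ with weight matrices $W_1,\dots,W_L$ and positive homogeneous activation $\sigma$ applied coordinatewise (here $\sigma=\mathrm{ReLU}$). Its width is the maximal number of rows among $W_1,\dots,W_{L-1}$. *)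

theory Defs
  imports "HOL-Analysis.Analysis"
begin

definition positive_homogeneous :: "('a::real_vector \<Rightarrow> real) \<Rightarrow> bool" where
  "positive_homogeneous g \<longleftrightarrow> (\<forall>x. \<forall>c::real. c > 0 \<longrightarrow> g (c *\<^sub>R x) = c * g x)"

definition relu :: "real \<Rightarrow> real" where
  "relu t = max 0 t"

definition mat_vec :: "real list list \<Rightarrow> real list \<Rightarrow> real list" where
  "mat_vec W v = map (\<lambda>r. sum_list (map2 (*) r v)) W"

fun eval_layers :: "real list list list \<Rightarrow> real list \<Rightarrow> real list" where
  "eval_layers [] h = h"
| "eval_layers (W # Ws) h = eval_layers Ws (mat_vec W (map relu h))"

text \<open>A bias-free ReLU MLP x \<mapsto> W_L relu(W_{L-1} relu(... relu(W_1 x))).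
  W1 is the first weight matrix, given by its rows (vectors in R^n);
  Ws = [W_2, ..., W_L] are the remaining matrices given as lists of rows.\<close>
definition homo_mlp_fun :: "(real^'n) list \<Rightarrow> real list list list \<Rightarrow> real^'n \<Rightarrow> real" where
  "homo_mlp_fun W1 Ws x = hd (eval_layers Ws (map (\<lambda>r. r \<bullet> x) W1))"

definition homo_mlp_wf :: "(real^'n) list \<Rightarrow> real list list list \<Rightarrow> bool" where
  "homo_mlp_wf W1 Ws \<longleftrightarrow>
     (let dims = length W1 # map length Ws in
        last dims = 1 \<and> (\<forall>i<length Ws. \<forall>r\<in>set (Ws ! i). length r = dims ! i))"

definition homo_mlp_width :: "(real^'n) list \<Rightarrow> real list list list \<Rightarrow> nat" where
  "homo_mlp_width W1 Ws = foldr max (butlast (length W1 # map length Ws)) 0"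

end

theory Submission
  imports Defs
begin


type_synonym 'n lf = "real \<times> real \<times> real \<times> (real^'n)"

definition enc :: "'n::finite list \<Rightarrow> real \<Rightarrow> real \<Rightarrow> real \<Rightarrow> real^'n \<Rightarrow> real list" where
  "enc js a m t x = [a, -a, m, -m, t] @ map (\<lambda>j. x$j) js @ map (\<lambda>j. - x$j) js"

definition rowf :: "'n::finite list \<Rightarrow> 'n lf \<Rightarrow> real list" where
  "rowf js \<phi> = (case \<phi> of (\<alpha>,\<beta>,\<gamma>,w) \<Rightarrow> [\<alpha>, -\<alpha>, \<beta>, -\<beta>, \<gamma>] @ map (\<lambda>j. w$j) js @ map (\<lambda>j. - w$j) js)"

definition appf :: "'n::finite lf \<Rightarrow> real \<Rightarrow> real \<Rightarrow> real \<Rightarrow> real^'n \<Rightarrow> real" where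
  "appf \<phi> a m T x = (case \<phi> of (\<alpha>,\<beta>,\<gamma>,w) \<Rightarrow> \<alpha>*a + \<beta>*m + \<gamma>*T + w \<bullet> x)"

definition negf :: "'n::finite lf \<Rightarrow> 'n lf" where
  "negf \<phi> = (case \<phi> of (\<alpha>,\<beta>,\<gamma>,w) \<Rightarrow> (-\<alpha>,-\<beta>,-\<gamma>,-w))"

lemma relu_diff: "relu a - relu (-a) = a"
  by (simp add: relu_def max_def)

lemma sum_list_map2_append:
  "length xs = length us \<Longrightarrow> sum_list (map2 (*) (xs @ ys) (us @ vs)) = sum_list (map2 (*) xs us) + sum_list (map2 (*) ys vs)"
  by simp

lemma sum_list_map2_map:
  "sum_list (map2 (*) (map f js) (map g js)) = (\<Sum>j\<leftarrow>js. f j * (g j :: real))"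
  by (induction js) auto

lemma rowf_enc:
  assumes "distinct js" "set js = UNIV"
  shows "sum_list (map2 (*) (rowf js \<phi>) (map relu (enc js a m t x))) = appf \<phi> a m (relu t) x"
proof -
  obtain \<alpha> \<beta> \<gamma> w where phi: "\<phi> = (\<alpha>,\<beta>,\<gamma>,w)" by (cases \<phi>) auto
  have "(\<Sum>j\<leftarrow>js. w$j * relu (x$j)) + (\<Sum>j\<leftarrow>js. (- w$j) * relu (- x$j))
        = (\<Sum>j\<leftarrow>js. w$j * x$j)"
  proof -
    have "(\<Sum>j\<leftarrow>js. w$j * relu (x$j)) + (\<Sum>j\<leftarrow>js. (- w$j) * relu (- x$j))
         = (\<Sum>j\<leftarrow>js. w$j * (relu (x$j) - relu (-x$j)))"
      by (induction js) (auto simp: algebra_simps)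
    then show ?thesis by (simp add: relu_diff)
  qed
  also have "\<dots> = w \<bullet> x"
    using assms by (simp add: sum_list_distinct_conv_sum_set inner_vec_def)
  finally have key: "(\<Sum>j\<leftarrow>js. w$j * relu (x$j)) + (\<Sum>j\<leftarrow>js. (- w$j) * relu (- x$j)) = w \<bullet> x" .
  have "sum_list (map2 (*) (rowf js \<phi>) (map relu (enc js a m t x)))
     = \<alpha> * (relu a - relu (-a)) + \<beta> * (relu m - relu (-m)) + \<gamma> * relu t
       + ((\<Sum>j\<leftarrow>js. w$j * relu (x$j)) + (\<Sum>j\<leftarrow>js. (- w$j) * relu (- x$j)))"
    unfolding phi rowf_def enc_def
    by (simp add: zip_map_map zip_same_conv_map o_def algebra_simps sum_list_addf)
  also have "\<dots> = appf \<phi> a m (relu t) x"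
    unfolding key relu_diff phi appf_def by simp
  finally show ?thesis .
qed

lemma appf_negf[simp]: "appf (negf \<phi>) a m T x = - appf \<phi> a m T x"
  by (cases \<phi>) (auto simp: appf_def negf_def)

lemma appf_axis[simp]: "appf (0,0,0,axis j 1) a m T x = x $ j"
  "appf (0,0,0,- axis j 1) a m T x = - x $ j"
  by (auto simp: appf_def inner_axis' )

type_synonym 'n spec = "'n lf \<times> 'n lf \<times> 'n lf"

fun layer :: "'n::finite list \<Rightarrow> 'n spec \<Rightarrow> real list list" where
  "layer js (\<phi>a,\<phi>m,\<phi>t) = [rowf js \<phi>a, rowf js (negf \<phi>a), rowf js \<phi>m, rowf js (negf \<phi>m), rowf js \<phi>t]
     @ map (\<lambda>j. rowf js (0,0,0,axis j 1)) js @ map (\<lambda>j. rowf js (0,0,0,- axis j 1)) js"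

fun stepS :: "real^'n::finite \<Rightarrow> 'n spec \<Rightarrow> real \<times> real \<times> real \<Rightarrow> real \<times> real \<times> real" where
  "stepS x (\<phi>a,\<phi>m,\<phi>t) (a,m,t) = (appf \<phi>a a m (relu t) x, appf \<phi>m a m (relu t) x, appf \<phi>t a m (relu t) x)"

lemma layer_enc:
  assumes "distinct js" "set js = UNIV"
  shows "mat_vec (layer js S) (map relu (enc js a m t x)) = (case stepS x S (a,m,t) of (a',m',t') \<Rightarrow> enc js a' m' t' x)"
proof -
  obtain \<phi>a \<phi>m \<phi>t where S: "S = (\<phi>a,\<phi>m,\<phi>t)" by (cases S) auto
  show ?thesis
    unfolding S mat_vec_def
    apply (simp only: layer.simps map_append list.map map_map o_def rowf_enc[OF assms])
    by (simp add: enc_def o_def)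
qed

lemma eval_run:
  assumes "distinct js" "set js = UNIV"
  shows "eval_layers (map (layer js) Ss @ [[rowf js \<phi>o]]) (enc js a m t x)
     = (case fold (stepS x) Ss (a,m,t) of (a',m',t') \<Rightarrow> [appf \<phi>o a' m' (relu t') x])"
proof (induction Ss arbitrary: a m t)
  case Nil
  then show ?case by (simp add: mat_vec_def rowf_enc[OF assms])
next
  case (Cons S Ss)
  obtain a' m' t' where st: "stepS x S (a,m,t) = (a',m',t')" by (cases "stepS x S (a,m,t)") auto
  show ?case using Cons[of a' m' t'] by (simp add: layer_enc[OF assms] st)
qed

definition maxl :: "(real^'n::finite) list \<Rightarrow> real^'n \<Rightarrow> real" where
  "maxl P x = Max ((\<lambda>p. p \<bullet> x) ` set P)"

definition dcf :: "(real^'n::finite) list \<Rightarrow> (real^'n) list \<Rightarrow> real^'n \<Rightarrow> real" where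
  "dcf P Q x = maxl P x - maxl Q x"

definition Mstep :: "real^'n::finite \<Rightarrow> 'n spec" where
  "Mstep l = ((1,0,0,0), (0,1,1,0), (0,-1,-1,l))"

definition Sstep :: "real^'n::finite \<Rightarrow> 'n spec" where
  "Sstep q = ((0,1,1,0), (0,0,0,q), (0,0,0,0))"

lemma Mfold:
  "fold (stepS x) (map Mstep ls) (a,m,t) = (a',m',t') \<Longrightarrow>
     a' = a \<and> m' + relu t' = fold max (map (\<lambda>l. l \<bullet> x) ls) (m + relu t)"
proof (induction ls arbitrary: a m t)
  case Nil
  then show ?case by simp
next
  case (Cons l ls)
  have st: "stepS x (Mstep l) (a,m,t) = (a, m + relu t, l \<bullet> x - (m + relu t))"
    by (simp add: Mstep_def appf_def)
  have "m + relu t + relu (l \<bullet> x - (m + relu t)) = max (l \<bullet> x) (m + relu t)"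
    by (simp add: relu_def max_def)
  with Cons.IH[of a "m + relu t" "l \<bullet> x - (m + relu t)"] Cons.prems show ?case
    by (simp add: st)
qed

lemma maxl_Cons: "maxl (p # ps) x = fold max (map (\<lambda>l. l \<bullet> x) ps) (p \<bullet> x)"
proof -
  have "maxl (p # ps) x = Max (set (map (\<lambda>l. l \<bullet> x) (p # ps)))"
    unfolding maxl_def by simp
  also have "\<dots> = fold max (map (\<lambda>l. l \<bullet> x) ps) (p \<bullet> x)"
    by (simp only: list.map Max.set_eq_fold)
  finally show ?thesis .
qed

definition W1of :: "'n::finite list \<Rightarrow> real^'n \<Rightarrow> (real^'n) list" where
  "W1of js p = [0, 0, p, -p, 0] @ map (\<lambda>j. axis j 1) js @ map (\<lambda>j. - axis j 1) js"

lemma W1of_enc: "map (\<lambda>r. r \<bullet> x) (W1of js p) = enc js 0 (p \<bullet> x) 0 x"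
  by (simp add: W1of_def enc_def inner_axis')

lemma net_run:
  assumes js: "distinct js" "set js = UNIV"
  shows "homo_mlp_fun (W1of js p) (map (layer js) (map Mstep ps @ [Sstep q] @ map Mstep qs) @ [[rowf js (1,-1,-1,0)]]) x
       = dcf (p # ps) (q # qs) x"
proof -
  obtain a1 m1 t1 where r1: "fold (stepS x) (map Mstep ps) (0, p \<bullet> x, 0) = (a1,m1,t1)"
    by (cases "fold (stepS x) (map Mstep ps) (0, p \<bullet> x, 0)") auto
  from Mfold[OF r1] have h1: "a1 = 0" "m1 + relu t1 = maxl (p#ps) x"
    by (auto simp: maxl_Cons relu_def)
  have r2: "stepS x (Sstep q) (a1,m1,t1) = (maxl (p#ps) x, q \<bullet> x, 0)"
    using h1 by (simp add: Sstep_def appf_def)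
  obtain a3 m3 t3 where r3: "fold (stepS x) (map Mstep qs) (maxl (p#ps) x, q \<bullet> x, 0) = (a3,m3,t3)"
    by (cases "fold (stepS x) (map Mstep qs) (maxl (p#ps) x, q \<bullet> x, 0)") auto
  from Mfold[OF r3] have h3: "a3 = maxl (p#ps) x" "m3 + relu t3 = maxl (q#qs) x"
    by (auto simp: maxl_Cons relu_def)
  have "homo_mlp_fun (W1of js p) (map (layer js) (map Mstep ps @ [Sstep q] @ map Mstep qs) @ [[rowf js (1,-1,-1,0)]]) x
     = hd (case fold (stepS x) (map Mstep ps @ [Sstep q] @ map Mstep qs) (0, p \<bullet> x, 0) of
           (a',m',t') \<Rightarrow> [appf (1,-1,-1,0) a' m' (relu t') x])"
    unfolding homo_mlp_fun_def W1of_enc eval_run[OF js] ..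
  also have "\<dots> = appf (1,-1,-1,0) a3 m3 (relu t3) x"
    using r1 r2 r3 by simp
  also have "\<dots> = dcf (p # ps) (q # qs) x"
    using h3 by (simp add: appf_def dcf_def algebra_simps)
  finally show ?thesis .
qed

lemma length_rowf[simp]: "length (rowf js \<phi>) = 5 + 2 * length js"
  by (cases \<phi>) (auto simp: rowf_def)

lemma length_layer[simp]: "length (layer js S) = 5 + 2 * length js"
  by (cases S) auto

lemma rows_layer: "r \<in> set (layer js S) \<Longrightarrow> length r = 5 + 2 * length js"
  by (cases S) auto

lemma foldr_max_replicate: "(max (L::nat) ^^ k) 0 \<le> L"
  by (induction k) auto

lemma net_wf:
  fixes js :: "'n::finite list"
  shows "homo_mlp_wf (W1of js p) (map (layer js) Ss @ [[rowf js \<phi>o]]) \<and>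
         homo_mlp_width (W1of js p) (map (layer js) Ss @ [[rowf js \<phi>o]]) \<le> 5 + 2 * length js"
proof -
  let ?L = "5 + 2 * length js"
  have lw: "length (W1of js p) = ?L" by (simp add: W1of_def)
  have dims: "length (W1of js p) # map length (map (layer js) Ss @ [[rowf js \<phi>o]])
        = replicate (Suc (length Ss)) ?L @ [1]"
    using lw by (simp add: o_def map_replicate_const)
  have wf: "homo_mlp_wf (W1of js p) (map (layer js) Ss @ [[rowf js \<phi>o]])"
    unfolding homo_mlp_wf_def Let_def dims
  proof (intro conjI allI impI ballI)
    fix i r assume i: "i < length (map (layer js) Ss @ [[rowf js \<phi>o]])"
      and r: "r \<in> set ((map (layer js) Ss @ [[rowf js \<phi>o]]) ! i)"
    have "length r = ?L"
    proof (cases "i < length Ss")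
      case True then show ?thesis using r by (auto simp: nth_append intro: rows_layer)
    next
      case False then have "i = length Ss" using i by simp
      then show ?thesis using r by (simp add: nth_append)
    qed
    moreover have "(replicate (Suc (length Ss)) ?L @ [1]) ! i = ?L"
      using i by (simp del: replicate_Suc add: nth_append)
    ultimately show "length r = (replicate (Suc (length Ss)) ?L @ [1]) ! i" by simp
  qed simp
  have "homo_mlp_width (W1of js p) (map (layer js) Ss @ [[rowf js \<phi>o]]) \<le> ?L"
    unfolding homo_mlp_width_def dims
    by (simp del: replicate_Suc add: foldr_max_replicate)
  with wf show ?thesis by simp
qed

lemma net_exists:
  fixes P Q :: "(real^'n::finite) list"
  assumes "P \<noteq> []" "Q \<noteq> []"
  shows "\<exists>W1 Ws. homo_mlp_wf W1 Ws \<and> homo_mlp_width W1 Ws \<le> 2 * (CARD('n) + 4) \<and>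
           (\<forall>x. homo_mlp_fun W1 Ws x = dcf P Q x)"
proof -
  obtain p ps q qs where PQ: "P = p # ps" "Q = q # qs"
    using assms by (cases P; cases Q) auto
  obtain js :: "'n list" where js: "distinct js" "set js = UNIV"
    using finite_distinct_list[of "UNIV :: 'n set"] by auto
  have "length js = CARD('n)" using js distinct_card by fastforce
  then show ?thesis
    using net_wf[of js p "map Mstep ps @ [Sstep q] @ map Mstep qs" "(1,-1,-1,0)"]
      net_run[OF js, of p ps q qs] PQ by fastforce
qed




lemma Max_plus_image:
  assumes "finite A" "A \<noteq> {}" "finite B" "B \<noteq> {}"
  shows "Max {f a + g b | a b. a \<in> A \<and> b \<in> B} = Max (f ` A) + Max (g ` B :: real set)"
proof (rule Max_eqI)
  have "{f a + g b | a b. a \<in> A \<and> b \<in> B} = (\<lambda>(a,b). f a + g b) ` (A \<times> B)" by auto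
  then show "finite {f a + g b | a b. a \<in> A \<and> b \<in> B}" using assms by simp
next
  fix y assume "y \<in> {f a + g b | a b. a \<in> A \<and> b \<in> B}"
  then obtain a b where "a \<in> A" "b \<in> B" "y = f a + g b" by auto
  then show "y \<le> Max (f ` A) + Max (g ` B)"
    using assms by (simp add: add_mono)
next
  have "Max (f ` A) \<in> f ` A" "Max (g ` B) \<in> g ` B" using assms by auto
  then obtain a b where a: "a \<in> A" "f a = Max (f ` A)" and b: "b \<in> B" "g b = Max (g ` B)"
    by (metis imageE)
  show "Max (f ` A) + Max (g ` B) \<in> {f a + g b | a b. a \<in> A \<and> b \<in> B}"
    using a b by force
qed

lemma maxl_plus:
  assumes "P \<noteq> []" "Q \<noteq> []"
  shows "maxl [p + q. p \<leftarrow> P, q \<leftarrow> Q] x = maxl P x + maxl Q x"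
proof -
  have "(\<lambda>p. p \<bullet> x) ` set [p + q. p \<leftarrow> P, q \<leftarrow> Q] = {p \<bullet> x + q \<bullet> x | p q. p \<in> set P \<and> q \<in> set Q}"
    by (force simp: inner_add_left)
  then show ?thesis unfolding maxl_def
    using Max_plus_image[of "set P" "set Q" "\<lambda>p. p \<bullet> x" "\<lambda>q. q \<bullet> x"] assms by simp
qed

lemma maxl_append:
  assumes "P \<noteq> []" "Q \<noteq> []"
  shows "maxl (P @ Q) x = max (maxl P x) (maxl Q x)"
  unfolding maxl_def using assms by (simp add: image_Un Max_Un)

lemma maxl_scale:
  assumes "P \<noteq> []" "c \<ge> 0"
  shows "maxl (map (\<lambda>p. c *\<^sub>R p) P) x = c * maxl P x"
proof -
  have "(\<lambda>p. p \<bullet> x) ` set (map (\<lambda>p. c *\<^sub>R p) P) = (\<lambda>y. c * y) ` ((\<lambda>p. p \<bullet> x) ` set P)"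
    by (auto simp: image_image)
  moreover have "Max ((\<lambda>y. c * y) ` ((\<lambda>p. p \<bullet> x) ` set P)) = c * Max ((\<lambda>p. p \<bullet> x) ` set P)"
    by (rule mono_Max_commute[symmetric]) (use assms in \<open>auto simp: mono_def mult_left_mono\<close>)
  ultimately show ?thesis unfolding maxl_def by simp
qed

lemma maxl_single[simp]: "maxl [w] x = w \<bullet> x"
  by (simp add: maxl_def)

lemma maxl_hom:
  assumes "c \<ge> 0" "P \<noteq> []"
  shows "maxl P (c *\<^sub>R x) = c * maxl P x"
proof -
  have "maxl P (c *\<^sub>R x) = maxl (map (\<lambda>p. c *\<^sub>R p) P) x"
    unfolding maxl_def by (simp add: image_image)
  then show ?thesis using maxl_scale assms by simp
qed

definition isD :: "(real^'n::finite \<Rightarrow> real) \<Rightarrow> bool" where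
  "isD g \<longleftrightarrow> (\<exists>P Q. P \<noteq> [] \<and> Q \<noteq> [] \<and> g = dcf P Q)"

lemma isD_lin: "isD (\<lambda>x. w \<bullet> x)"
  unfolding isD_def by (rule exI[of _ "[w]"], rule exI[of _ "[0]"]) (auto simp: dcf_def)

lemma isD_neg: "isD g \<Longrightarrow> isD (\<lambda>x. - g x)"
  unfolding isD_def dcf_def by (metis (no_types, lifting) minus_diff_eq)

lemma isD_add: assumes "isD g" "isD h" shows "isD (\<lambda>x. g x + h x)"
proof -
  obtain P Q P' Q' where *: "P \<noteq> []" "Q \<noteq> []" "g = dcf P Q" "P' \<noteq> []" "Q' \<noteq> []" "h = dcf P' Q'"
    using assms unfolding isD_def by blast
  let ?A = "[p + q. p \<leftarrow> P, q \<leftarrow> P']" and ?B = "[p + q. p \<leftarrow> Q, q \<leftarrow> Q']"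
  have "?A \<noteq> []" "?B \<noteq> []" using * by (auto simp: neq_Nil_conv)
  moreover have "(\<lambda>x. g x + h x) = dcf ?A ?B"
    using * by (auto simp: dcf_def maxl_plus fun_eq_iff)
  ultimately show ?thesis unfolding isD_def by blast
qed

lemma isD_diff: "isD g \<Longrightarrow> isD h \<Longrightarrow> isD (\<lambda>x. g x - h x)"
  using isD_add[of g "\<lambda>x. - h x"] isD_neg[of h] by simp

lemma isD_scale_nonneg: assumes "isD g" "c \<ge> 0" shows "isD (\<lambda>x. c * g x)"
proof -
  obtain P Q where *: "P \<noteq> []" "Q \<noteq> []" "g = dcf P Q"
    using assms unfolding isD_def by blast
  have "(\<lambda>x. c * g x) = dcf (map (\<lambda>p. c *\<^sub>R p) P) (map (\<lambda>p. c *\<^sub>R p) Q)"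
    unfolding *(3) dcf_def using *(1,2) assms by (simp add: maxl_scale fun_eq_iff right_diff_distrib)
  then show ?thesis unfolding isD_def using * by auto
qed

lemma isD_scale: assumes "isD g" shows "isD (\<lambda>x. c * g x)"
proof (cases "c \<ge> 0")
  case True then show ?thesis using isD_scale_nonneg assms by blast
next
  case False
  then have "isD (\<lambda>x. (-c) * g x)" by (intro isD_scale_nonneg[OF assms]) simp
  then have "isD (\<lambda>x. - ((-c) * g x))" by (rule isD_neg)
  then show ?thesis by simp
qed

lemma isD_max: assumes "isD g" "isD h" shows "isD (\<lambda>x. max (g x) (h x))"
proof -
  obtain P Q P' Q' where *: "P \<noteq> []" "Q \<noteq> []" "g = dcf P Q" "P' \<noteq> []" "Q' \<noteq> []" "h = dcf P' Q'"
    using assms unfolding isD_def by blast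
  let ?A = "[p + q. p \<leftarrow> P, q \<leftarrow> Q'] @ [p + q. p \<leftarrow> P', q \<leftarrow> Q]" and ?B = "[p + q. p \<leftarrow> Q, q \<leftarrow> Q']"
  have ne: "[p + q. p \<leftarrow> P, q \<leftarrow> Q'] \<noteq> []" "[p + q. p \<leftarrow> P', q \<leftarrow> Q] \<noteq> []" "?B \<noteq> []"
    using * by (auto simp: neq_Nil_conv)
  have "(\<lambda>x. max (g x) (h x)) = dcf ?A ?B"
  proof
    fix x
    have "max (g x) (h x) = max (maxl P x + maxl Q' x) (maxl P' x + maxl Q x) - (maxl Q x + maxl Q' x)"
      using * by (simp add: dcf_def max_def)
    then show "max (g x) (h x) = dcf ?A ?B x"
      using * ne by (simp add: dcf_def maxl_append maxl_plus)
  qed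
  moreover have "?A \<noteq> []" using ne by simp
  ultimately show ?thesis unfolding isD_def using ne by blast
qed

lemma isD_min: assumes "isD g" "isD h" shows "isD (\<lambda>x. min (g x) (h x))"
proof -
  have "isD (\<lambda>x. - max (- g x) (- h x))"
    using isD_neg isD_max assms by blast
  moreover have "(\<lambda>x. - max (- g x) (- h x)) = (\<lambda>x. min (g x) (h x))"
    by (auto simp: fun_eq_iff max_def min_def)
  ultimately show ?thesis by simp
qed

lemma isD_zero: "isD (\<lambda>x. 0)"
  using isD_lin[of 0] by simp

lemma isD_sum: "finite I \<Longrightarrow> (\<And>i. i \<in> I \<Longrightarrow> isD (g i)) \<Longrightarrow> isD (\<lambda>x. \<Sum>i\<in>I. g i x)"
  by (induction I rule: finite_induct) (auto intro: isD_zero isD_add)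

lemma isD_relu: "isD (\<lambda>x. relu (w \<bullet> x))"
proof -
  have "isD (\<lambda>x. max ((\<lambda>x. 0) x) ((\<lambda>x. w \<bullet> x) x))" by (rule isD_max[OF isD_zero isD_lin])
  then show ?thesis unfolding relu_def by simp
qed

definition l1n :: "real^'n::finite \<Rightarrow> real" where
  "l1n x = (\<Sum>i\<in>UNIV. \<bar>x $ i\<bar>)"

lemma isD_l1n: "isD (l1n :: real^'n::finite \<Rightarrow> real)"
proof -
  have "isD (\<lambda>x. \<bar>x $ i\<bar>)" for i :: 'n
  proof -
    have "(\<lambda>x. \<bar>x $ i\<bar>) = (\<lambda>x. max (axis i 1 \<bullet> x) ((- axis i 1) \<bullet> x))"
      by (auto simp: fun_eq_iff inner_axis' abs_real_def max_def)
    moreover have "isD (\<lambda>x. max ((\<lambda>x. axis i 1 \<bullet> x) x) ((\<lambda>x. (- axis i 1) \<bullet> x) x))"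
      by (rule isD_max[OF isD_lin isD_lin])
    ultimately show ?thesis by simp
  qed
  then show ?thesis unfolding l1n_def by (intro isD_sum) auto
qed


lemma fold_max_cont:
  fixes R :: "(real^'n::finite) list"
  shows "continuous_on UNIV v \<Longrightarrow> continuous_on UNIV (\<lambda>x. fold max (map (\<lambda>l. l \<bullet> x) R) (v x))"
proof (induction R arbitrary: v)
  case Nil
  then show ?case by simp
next
  case (Cons l R)
  have "continuous_on UNIV (\<lambda>x. max (l \<bullet> x) (v x))"
    by (rule continuous_on_max[OF continuous_on_inner[OF continuous_on_const continuous_on_id] Cons.prems])
  then have "continuous_on UNIV (\<lambda>x. fold max (map (\<lambda>l. l \<bullet> x) R) (max (l \<bullet> x) (v x)))"
    by (rule Cons.IH)
  then show ?case by simp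
qed

lemma maxl_cont:
  fixes R :: "(real^'n::finite) list"
  assumes "R \<noteq> []"
  shows "continuous_on UNIV (maxl R)"
proof -
  obtain r R' where RR: "R = r # R'" using assms by (cases R) auto
  have e: "maxl R = (\<lambda>x. fold max (map (\<lambda>l. l \<bullet> x) R') (r \<bullet> x))"
    unfolding RR by (rule ext) (rule maxl_Cons)
  have "continuous_on UNIV (\<lambda>x. r \<bullet> x)"
    by (rule continuous_on_inner[OF continuous_on_const continuous_on_id])
  then have "continuous_on UNIV (\<lambda>x. fold max (map (\<lambda>l. l \<bullet> x) R') (r \<bullet> x))"
    by (rule fold_max_cont)
  then show ?thesis by (simp only: e)
qed

lemma isD_cont:
  fixes g :: "real^'n::finite \<Rightarrow> real"
  assumes "isD g" shows "continuous_on UNIV g"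
proof -
  obtain P Q where *: "g = dcf P Q" "P \<noteq> []" "Q \<noteq> []" using assms unfolding isD_def by blast
  have "g = (\<lambda>x. maxl P x - maxl Q x)" unfolding *(1) dcf_def ..
  then show ?thesis using maxl_cont[OF *(2)] maxl_cont[OF *(3)] continuous_on_diff by metis
qed

lemma isD_hom: "isD g \<Longrightarrow> c \<ge> 0 \<Longrightarrow> g (c *\<^sub>R x) = c * g x"
proof -
  assume "isD g" "c \<ge> 0"
  then obtain P Q where *: "g = dcf P Q" "P \<noteq> []" "Q \<noteq> []" unfolding isD_def by blast
  show ?thesis unfolding *(1) dcf_def using maxl_hom[OF \<open>c \<ge> 0\<close> *(2)] maxl_hom[OF \<open>c \<ge> 0\<close> *(3)]
    by (simp add: right_diff_distrib)
qed




lemma Min_closed_fun: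
  assumes "finite T" "T \<noteq> {}" "\<And>t. t \<in> T \<Longrightarrow> h t \<in> L"
    and minc: "\<And>g k. g \<in> L \<Longrightarrow> k \<in> L \<Longrightarrow> (\<lambda>x. min (g x) (k x)) \<in> L"
  shows "(\<lambda>x. Min ((\<lambda>t. h t x :: real) ` T)) \<in> L"
  using assms(1,2,3)
proof (induction T rule: finite_ne_induct)
  case (singleton t)
  then show ?case by simp
next
  case (insert t T)
  have "(\<lambda>x. min (h t x) (Min ((\<lambda>t. h t x) ` T))) \<in> L"
    using insert by (intro minc) auto
  moreover have "(\<lambda>x. Min ((\<lambda>t. h t x) ` insert t T)) = (\<lambda>x. min (h t x) (Min ((\<lambda>t. h t x) ` T)))"
    using insert by (simp add: Min_insert)
  ultimately show ?case by simp
qed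

lemma Max_closed_fun:
  assumes "finite T" "T \<noteq> {}" "\<And>t. t \<in> T \<Longrightarrow> h t \<in> L"
    and maxc: "\<And>g k. g \<in> L \<Longrightarrow> k \<in> L \<Longrightarrow> (\<lambda>x. max (g x) (k x)) \<in> L"
  shows "(\<lambda>x. Max ((\<lambda>t. h t x :: real) ` T)) \<in> L"
  using assms(1,2,3)
proof (induction T rule: finite_ne_induct)
  case (singleton t)
  then show ?case by simp
next
  case (insert t T)
  have "(\<lambda>x. max (h t x) (Max ((\<lambda>t. h t x) ` T))) \<in> L"
    using insert by (intro maxc) auto
  moreover have "(\<lambda>x. Max ((\<lambda>t. h t x) ` insert t T)) = (\<lambda>x. max (h t x) (Max ((\<lambda>t. h t x) ` T)))"
    using insert by (simp add: Max_insert)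
  ultimately show ?case by simp
qed

lemma lattice_approx:
  fixes F :: "'a::metric_space \<Rightarrow> real"
  assumes K: "compact K" and Fc: "continuous_on K F"
    and Lc: "\<And>g. g \<in> L \<Longrightarrow> continuous_on K g"
    and maxc: "\<And>g k. g \<in> L \<Longrightarrow> k \<in> L \<Longrightarrow> (\<lambda>x. max (g x) (k x)) \<in> L"
    and minc: "\<And>g k. g \<in> L \<Longrightarrow> k \<in> L \<Longrightarrow> (\<lambda>x. min (g x) (k x)) \<in> L"
    and interp: "\<And>s t. s \<in> K \<Longrightarrow> t \<in> K \<Longrightarrow> \<exists>h\<in>L. h s = F s \<and> h t = F t"
    and Lne: "L \<noteq> {}" and e: "e > 0"
  shows "\<exists>h\<in>L. \<forall>x\<in>K. \<bar>h x - F x\<bar> < e"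
proof (cases "K = {}")
  case True
  then show ?thesis using Lne by auto
next
  case Kne: False
  have step1: "\<exists>g\<in>L. g s = F s \<and> (\<forall>x\<in>K. g x < F x + e)" if s: "s \<in> K" for s
  proof -
    have "\<forall>t\<in>K. \<exists>h\<in>L. h s = F s \<and> h t = F t" using interp s by blast
    then obtain h where h: "\<And>t. t \<in> K \<Longrightarrow> h t \<in> L \<and> h t s = F s \<and> h t t = F t"
      by metis
    have "\<exists>d>0. \<forall>x\<in>K. dist x t < d \<longrightarrow> h t x < F x + e" if t: "t \<in> K" for t
    proof -
      have "continuous_on K (\<lambda>x. h t x - F x)"
        using Lc h t Fc by (intro continuous_on_diff) auto
      then obtain d where d: "d > 0" "\<forall>x\<in>K. dist x t < d \<longrightarrow> dist (h t x - F x) (h t t - F t) < e"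
        using t e unfolding continuous_on_iff by metis
      have "\<forall>x\<in>K. dist x t < d \<longrightarrow> h t x < F x + e"
        using d(2) h[OF t] by (auto simp: dist_real_def abs_less_iff)
      then show ?thesis using d(1) by blast
    qed
    then obtain d where d: "\<And>t. t \<in> K \<Longrightarrow> d t > 0 \<and> (\<forall>x\<in>K. dist x t < d t \<longrightarrow> h t x < F x + e)"
      by metis
    have "K \<subseteq> (\<Union>t\<in>K. ball t (d t))"
      using d by force
    then obtain T where T: "T \<subseteq> K" "finite T" "K \<subseteq> (\<Union>t\<in>T. ball t (d t))"
      using compactE_image[OF K, of K "\<lambda>t. ball t (d t)"] by auto
    have Tne: "T \<noteq> {}" using T(3) s by auto
    let ?g = "\<lambda>x. Min ((\<lambda>t. h t x) ` T)"
    have "?g \<in> L"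
      using T Tne h by (intro Min_closed_fun minc) auto
    moreover have "?g s = F s"
    proof -
      have "(\<lambda>t. h t s) ` T = {F s}" using T(1) Tne h by force
      then show ?thesis by simp
    qed
    moreover have "\<forall>x\<in>K. ?g x < F x + e"
    proof
      fix x assume x: "x \<in> K"
      then obtain t where t: "t \<in> T" "x \<in> ball t (d t)" using T(3) by auto
      have "?g x \<le> h t x" using t T(2) by (intro Min_le) auto
      also have "h t x < F x + e" using d[of t] t T(1) x by (auto simp: dist_commute)
      finally show "?g x < F x + e" .
    qed
    ultimately show ?thesis by (intro bexI[of _ ?g]) auto
  qed
  then obtain g where g: "\<And>s. s \<in> K \<Longrightarrow> g s \<in> L \<and> g s s = F s \<and> (\<forall>x\<in>K. g s x < F x + e)"
    by metis
  have "\<exists>d>0. \<forall>x\<in>K. dist x s < d \<longrightarrow> g s x > F x - e" if s: "s \<in> K" for s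
  proof -
    have "continuous_on K (\<lambda>x. g s x - F x)"
      using Lc g s Fc by (intro continuous_on_diff) auto
    then obtain d where d: "d > 0" "\<forall>x\<in>K. dist x s < d \<longrightarrow> dist (g s x - F x) (g s s - F s) < e"
      using s e unfolding continuous_on_iff by metis
    have "\<forall>x\<in>K. dist x s < d \<longrightarrow> g s x > F x - e"
      using d(2) g[OF s] by (auto simp: dist_real_def abs_less_iff)
    then show ?thesis using d(1) by blast
  qed
  then obtain d where d: "\<And>s. s \<in> K \<Longrightarrow> d s > 0 \<and> (\<forall>x\<in>K. dist x s < d s \<longrightarrow> g s x > F x - e)"
    by metis
  have "K \<subseteq> (\<Union>s\<in>K. ball s (d s))"
    using d by force
  then obtain S where S: "S \<subseteq> K" "finite S" "K \<subseteq> (\<Union>s\<in>S. ball s (d s))"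
    using compactE_image[OF K, of K "\<lambda>s. ball s (d s)"] by auto
  have Sne: "S \<noteq> {}" using S(3) Kne by auto
  let ?h = "\<lambda>x. Max ((\<lambda>s. g s x) ` S)"
  have "?h \<in> L"
    using S Sne g by (intro Max_closed_fun maxc) auto
  moreover have "\<forall>x\<in>K. \<bar>?h x - F x\<bar> < e"
  proof
    fix x assume x: "x \<in> K"
    then obtain s where s: "s \<in> S" "x \<in> ball s (d s)" using S(3) by auto
    have "F x - e < g s x" using d[of s] s S(1) x by (auto simp: dist_commute)
    also have "g s x \<le> ?h x" using s S(2) by (intro Max_ge) auto
    finally have lo: "F x - e < ?h x" .
    have "?h x \<in> (\<lambda>s. g s x) ` S" using S(2) Sne by (intro Max_in) auto
    then obtain s' where "s' \<in> S" "?h x = g s' x" by auto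
    then have hi: "?h x < F x + e" using g[of s'] S(1) x by auto
    from lo hi show "\<bar>?h x - F x\<bar> < e" by (simp add: abs_less_iff)
  qed
  ultimately show ?thesis by (intro bexI[of _ ?h]) auto
qed




lemma ph_zero: "positive_homogeneous F \<Longrightarrow> F 0 = 0"
  unfolding positive_homogeneous_def
  by (metis (no_types, opaque_lifting) mult_2 scaleR_zero_right zero_less_numeral
      add_cancel_right_left)

lemma interp_lin:
  fixes s t :: "real^'n::finite"
  assumes "s \<noteq> 0"
  shows "\<exists>w. w \<bullet> s = a \<and> (t - ((t \<bullet> s) / (s \<bullet> s)) *\<^sub>R s \<noteq> 0 \<longrightarrow> w \<bullet> t = b)"
proof -
  define t' where "t' = t - ((t \<bullet> s) / (s \<bullet> s)) *\<^sub>R s"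
  have ss: "s \<bullet> s \<noteq> 0" using assms by simp
  have ts: "t' \<bullet> s = 0" unfolding t'_def using ss by (simp add: inner_diff_left)
  have tt: "t' \<bullet> t = t' \<bullet> t'"
  proof -
    have "t' \<bullet> t' = t' \<bullet> (t - ((t \<bullet> s) / (s \<bullet> s)) *\<^sub>R s)"
      by (simp only: t'_def[symmetric])
    also have "\<dots> = t' \<bullet> t - ((t \<bullet> s) / (s \<bullet> s)) * (t' \<bullet> s)"
      by (simp only: inner_diff_right inner_scaleR_right)
    finally have "t' \<bullet> t' = t' \<bullet> t - ((t \<bullet> s) / (s \<bullet> s)) * (t' \<bullet> s)" .
    then show ?thesis using ts by simp
  qed
  define \<beta> where "\<beta> = (b - a * (s \<bullet> t) / (s \<bullet> s)) / (t' \<bullet> t')"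
  define w where "w = (a / (s \<bullet> s)) *\<^sub>R s + \<beta> *\<^sub>R t'"
  have "w \<bullet> s = a"
    unfolding w_def using ss ts by (simp add: inner_add_left inner_commute[of t' s])
  moreover have "t' \<noteq> 0 \<longrightarrow> w \<bullet> t = b"
  proof
    assume "t' \<noteq> 0"
    then have nz: "t' \<bullet> t' \<noteq> 0" by simp
    have "w \<bullet> t = (a / (s \<bullet> s)) * (s \<bullet> t) + \<beta> * (t' \<bullet> t)"
      unfolding w_def by (simp add: inner_add_left)
    also have "\<dots> = (a / (s \<bullet> s)) * (s \<bullet> t) + \<beta> * (t' \<bullet> t')" using tt by simp
    also have "\<dots> = b" unfolding \<beta>_def using nz by simp
    finally show "w \<bullet> t = b" .
  qed
  ultimately show ?thesis unfolding t'_def by blast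
qed

lemma interp_D:
  fixes F :: "real^'n::finite \<Rightarrow> real"
  assumes F: "positive_homogeneous F"
  shows "\<exists>h. isD h \<and> h s = F s \<and> h t = F t"
proof -
  have F0: "F 0 = 0" using ph_zero[OF F] .
  have Fh: "c > 0 \<Longrightarrow> F (c *\<^sub>R x) = c * F x" for c x
    using F unfolding positive_homogeneous_def by blast
  have lin1: "\<exists>h. isD h \<and> h 0 = F 0 \<and> h u = F u" for u :: "real^'n"
  proof (cases "u = 0")
    case True then show ?thesis using isD_zero F0 by auto
  next
    case False
    let ?w = "(F u / (u \<bullet> u)) *\<^sub>R u"
    have "?w \<bullet> u = F u" using False by simp
    then show ?thesis using isD_lin[of ?w] F0 by (intro exI[of _ "\<lambda>x. ?w \<bullet> x"]) auto
  qed
  show ?thesis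
  proof (cases "s = 0")
    case True then show ?thesis using lin1[of t] by auto
  next
    case sne: False
    show ?thesis
    proof (cases "t = 0")
      case True then show ?thesis using lin1[of s] by auto
    next
      case tne: False
      let ?c = "(t \<bullet> s) / (s \<bullet> s)"
      let ?t' = "t - ?c *\<^sub>R s"
      show ?thesis
      proof (cases "?t' = 0")
        case False
        obtain w where "w \<bullet> s = F s" "w \<bullet> t = F t"
          using interp_lin[OF sne, of "F s" t "F t"] False by blast
        then show ?thesis using isD_lin[of w] by (intro exI[of _ "\<lambda>x. w \<bullet> x"]) auto
      next
        case True
        then have tc: "t = ?c *\<^sub>R s" by simp
        have ss: "s \<bullet> s > 0" using sne by simp
        have cne: "?c \<noteq> 0" using tc tne by (metis scaleR_zero_left)
        show ?thesis
        proof (cases "?c > 0")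
          case True
          let ?w = "(F s / (s \<bullet> s)) *\<^sub>R s"
          have "F t = ?c * F s" using Fh[OF True, of s] tc by simp
          moreover have "?w \<bullet> t = ?c * F s"
            using ss by (subst tc) simp
          moreover have "?w \<bullet> s = F s" using ss by simp
          ultimately show ?thesis using isD_lin[of ?w] by (intro exI[of _ "\<lambda>x. ?w \<bullet> x"]) auto
        next
          case False
          then have cneg: "?c < 0" using cne by linarith
          define \<alpha> where "\<alpha> = F s / (s \<bullet> s)"
          define \<beta> where "\<beta> = F t / ((- ?c) * (s \<bullet> s))"
          let ?h = "\<lambda>x. \<alpha> * relu (s \<bullet> x) + \<beta> * relu ((-s) \<bullet> x)"
          have "isD ?h" by (intro isD_add isD_scale isD_relu)
          moreover have "?h s = F s"
            using ss unfolding \<alpha>_def by (simp add: relu_def)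
          moreover have "?h t = F t"
          proof -
            have "s \<bullet> t = ?c * (s \<bullet> s)" by (subst tc) simp
            then have "?h t = \<alpha> * relu (?c * (s \<bullet> s)) + \<beta> * relu (- (?c * (s \<bullet> s)))"
              by simp
            also have "\<dots> = \<beta> * ((- ?c) * (s \<bullet> s))"
            proof -
              have "t \<bullet> s < 0" using cneg ss by (simp add: divide_less_0_iff)
              then show ?thesis using ss by (simp add: relu_def max_def inner_commute)
            qed
            also have "\<dots> = F t" unfolding \<beta>_def using cneg ss by (simp add: divide_less_0_iff)
            finally show ?thesis .
          qed
          ultimately show ?thesis by blast
        qed
      qed
    qed
  qed
qed




lemma cont_meas_leb: "continuous_on UNIV (g :: 'a::euclidean_space \<Rightarrow> real) \<Longrightarrow> g \<in> borel_measurable lebesgue"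
  by (simp add: borel_measurable_continuous_onI measurable_completion)

lemma lusin:
  fixes u :: "'a::euclidean_space \<Rightarrow> real"
  assumes u: "u \<in> borel_measurable lebesgue" and X: "X \<in> sets lebesgue" "emeasure lebesgue X < \<infinity>"
    and d: "\<delta> > 0"
  shows "\<exists>K. closed K \<and> K \<subseteq> X \<and> emeasure lebesgue (X - K) < ennreal \<delta> \<and> continuous_on K u"
proof -
  have "u measurable_on UNIV"
    using lebesgue_measurable_imp_measurable_on_real[OF u] by simp
  then obtain N g where N: "negligible N" and gc: "\<And>n. continuous_on UNIV (g n)"
    and lim: "\<And>x. x \<notin> N \<Longrightarrow> (\<lambda>n. g n x) \<longlonglongrightarrow> u x"
    unfolding measurable_on_def by auto
  have Nnull: "N \<in> null_sets lebesgue" using N negligible_iff_null_sets by blast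
  then have Nm: "N \<in> sets lebesgue" by auto
  have gm: "g n \<in> borel_measurable lebesgue" for n using gc cont_meas_leb by blast
  define A where "A m j = {x. 1 / real (Suc m) \<le> \<bar>g j x - u x\<bar>}" for m j
  have Am: "A m j \<in> sets lebesgue" for m j
  proof -
    have "(\<lambda>x. \<bar>g j x - u x\<bar>) \<in> borel_measurable lebesgue" using gm u by measurable
    then show ?thesis unfolding A_def borel_measurable_iff_ge by simp
  qed
  define E where "E m k = (X - N) \<inter> (\<Union>j\<in>{k..}. A m j)" for m k
  have Em: "E m k \<in> sets lebesgue" for m k
    unfolding E_def using Am X Nm by (intro sets.Int sets.Diff sets.countable_UN'') auto
  have Efin: "emeasure lebesgue (E m k) \<noteq> \<infinity>" for m k
  proof -
    have "emeasure lebesgue (E m k) \<le> emeasure lebesgue X"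
      using Em X unfolding E_def by (intro emeasure_mono) auto
    then show ?thesis using X(2) by (auto simp: top_unique less_top)
  qed
  have Edec: "decseq (E m)" for m
    unfolding decseq_def E_def by (auto simp: subset_iff)
  have Eint: "(\<Inter>k. E m k) = {}" for m
  proof (rule ccontr)
    assume "(\<Inter>k. E m k) \<noteq> {}"
    then obtain x where x: "\<And>k. x \<in> E m k" by auto
    then have xN: "x \<notin> N" unfolding E_def by auto
    have "\<forall>\<^sub>F j in sequentially. dist (g j x) (u x) < 1 / real (Suc m)"
      using lim[OF xN] unfolding tendsto_iff by auto
    then obtain k where k: "\<And>j. j \<ge> k \<Longrightarrow> \<bar>g j x - u x\<bar> < 1 / real (Suc m)"
      unfolding eventually_sequentially dist_real_def by auto
    from x[of k] obtain j where "j \<ge> k" "x \<in> A m j" unfolding E_def by auto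
    with k show False unfolding A_def by force
  qed
  have "\<exists>k. emeasure lebesgue (E m k) < ennreal (\<delta> / 2 * (1/2)^Suc m)" for m
  proof -
    have "(\<lambda>k. emeasure lebesgue (E m k)) \<longlonglongrightarrow> 0"
      using Lim_emeasure_decseq[of "E m" lebesgue] Em Edec Efin Eint by auto
    moreover have "ennreal (\<delta> / 2 * (1/2)^Suc m) > 0" using d by simp
    ultimately have "\<forall>\<^sub>F k in sequentially. emeasure lebesgue (E m k) < ennreal (\<delta> / 2 * (1/2)^Suc m)"
      by (rule order_tendstoD)
    then show ?thesis unfolding eventually_sequentially by auto
  qed
  then obtain km where km: "\<And>m. emeasure lebesgue (E m (km m)) < ennreal (\<delta> / 2 * (1/2)^Suc m)"
    by metis
  define B where "B = (\<Union>m. E m (km m))"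
  have Bm: "B \<in> sets lebesgue" unfolding B_def using Em by auto
  have "emeasure lebesgue B \<le> (\<Sum>m. emeasure lebesgue (E m (km m)))"
    unfolding B_def using Em by (intro emeasure_subadditive_countably) auto
  also have "\<dots> \<le> (\<Sum>m. ennreal (\<delta> / 2 * (1/2)^Suc m))"
    using km by (intro suminf_le) (auto intro: less_imp_le)
  also have "\<dots> = ennreal (\<delta> / 2 * 1)"
    using d by (intro suminf_ennreal_eq sums_mult power_half_series) auto
  finally have Bmeas: "emeasure lebesgue B \<le> ennreal (\<delta> / 2)" by simp
  define G where "G = X - N - B"
  have Gm: "G \<in> sets lebesgue" unfolding G_def using X Nm Bm by auto
  have d2: "\<delta>/2 > 0" using d by simp
  obtain T where T: "closed T" "T \<subseteq> G" "G - T \<in> lmeasurable" "emeasure lebesgue (G - T) < ennreal (\<delta>/2)"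
    by (rule sets_lebesgue_inner_closed[OF Gm d2])
  have Tm: "T \<in> sets lebesgue" using T(1) by (simp add: borel_closed)
  have "X - T \<subseteq> N \<union> B \<union> (G - T)" unfolding G_def by auto
  then have "emeasure lebesgue (X - T) \<le> emeasure lebesgue (N \<union> B \<union> (G - T))"
    using Nm Bm Gm Tm by (intro emeasure_mono) auto
  also have "\<dots> \<le> emeasure lebesgue (N \<union> B) + emeasure lebesgue (G - T)"
    using Nm Bm Gm Tm by (intro emeasure_subadditive) auto
  also have "\<dots> \<le> (emeasure lebesgue N + emeasure lebesgue B) + emeasure lebesgue (G - T)"
    using Nm Bm by (intro add_right_mono emeasure_subadditive) auto
  also have "\<dots> < ennreal (\<delta>/2) + ennreal (\<delta>/2)"
  proof -
    have "emeasure lebesgue N = 0" using Nnull by auto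
    then have "emeasure lebesgue N + emeasure lebesgue B \<le> ennreal (\<delta>/2)" using Bmeas by simp
    then have "emeasure lebesgue N + emeasure lebesgue B + emeasure lebesgue (G - T)
        \<le> ennreal (\<delta>/2) + emeasure lebesgue (G - T)" by (rule add_right_mono)
    also have "\<dots> < ennreal (\<delta>/2) + ennreal (\<delta>/2)"
      using T(4) by (simp add: ennreal_add_left_cancel_less)
    finally show ?thesis .
  qed
  also have "\<dots> = ennreal \<delta>" using d by (simp flip: ennreal_plus)
  finally have XT: "emeasure lebesgue (X - T) < ennreal \<delta>" .
  have "uniform_limit T g u sequentially"
    unfolding uniform_limit_iff
  proof (intro allI impI)
    fix e :: real assume e: "e > 0"
    obtain m where m: "1 / real (Suc m) < e"
      using e by (metis inverse_eq_divide reals_Archimedean)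
    have "\<forall>x\<in>T. dist (g j x) (u x) < e" if j: "j \<ge> km m" for j
    proof
      fix x assume x: "x \<in> T"
      then have "x \<notin> E m (km m)" using T(2) unfolding G_def B_def by auto
      moreover have "x \<in> X - N" using x T(2) unfolding G_def by auto
      ultimately have "x \<notin> A m j" using j unfolding E_def by auto
      then have "\<bar>g j x - u x\<bar> < 1 / real (Suc m)" unfolding A_def by auto
      then show "dist (g j x) (u x) < e" using m by (simp add: dist_real_def)
    qed
    then show "\<forall>\<^sub>F j in sequentially. \<forall>x\<in>T. dist (g j x) (u x) < e"
      unfolding eventually_sequentially by blast
  qed
  then have "continuous_on T u"
    by (rule uniform_limit_theorem[rotated]) (auto intro!: always_eventually continuous_on_subset[OF gc])
  moreover have "T \<subseteq> X" using T(2) unfolding G_def by auto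
  ultimately show ?thesis using T(1) XT by blast
qed




definition clampv :: "real \<Rightarrow> real \<Rightarrow> real" where
  "clampv c v = max (-c) (min c v)"

lemma clampv_bound: "c \<ge> 0 \<Longrightarrow> \<bar>clampv c v\<bar> \<le> c"
  by (auto simp: clampv_def)

lemma clampv_diff: "c \<ge> 0 \<Longrightarrow> \<bar>v - clampv c v\<bar> \<le> \<bar>v\<bar>"
  by (auto simp: clampv_def)

lemma clampv_id: "\<bar>v\<bar> \<le> c \<Longrightarrow> clampv c v = v"
  by (auto simp: clampv_def)

lemma clampv_lip: "\<bar>w\<bar> \<le> c \<Longrightarrow> \<bar>clampv c v - w\<bar> \<le> \<bar>v - w\<bar>"
  by (auto simp: clampv_def)

lemma l1n_nonneg: "l1n x \<ge> 0"
  by (simp add: l1n_def sum_nonneg)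

lemma l1n_zero: "l1n x = 0 \<Longrightarrow> x = 0"
proof -
  assume "l1n x = 0"
  then have "\<forall>i\<in>UNIV. \<bar>x $ i\<bar> = 0"
    unfolding l1n_def by (subst sum_nonneg_eq_0_iff[symmetric]) auto
  then show "x = 0" by (simp add: vec_eq_iff)
qed

lemma l1n_hom: "c \<ge> 0 \<Longrightarrow> l1n (c *\<^sub>R x) = c * l1n x"
  by (simp add: l1n_def abs_mult sum_distrib_left)

lemma l1n_cont: "continuous_on UNIV (l1n :: real^'n::finite \<Rightarrow> real)"
  using isD_cont[OF isD_l1n] .

lemma trunc:
  fixes u :: "real^'n::finite \<Rightarrow> real"
  assumes u: "integrable lebesgue u" and u0: "u 0 = 0" and e: "e > 0"
  shows "\<exists>M::nat. integral\<^sup>L lebesgue (\<lambda>x. \<bar>u x - clampv (real M * l1n x) (u x)\<bar>) < e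
     \<and> integrable lebesgue (\<lambda>x. \<bar>u x - clampv (real M * l1n x) (u x)\<bar>)"
proof -
  have um: "u \<in> borel_measurable lebesgue" using u by auto
  have lm: "l1n \<in> borel_measurable lebesgue" using cont_meas_leb[OF l1n_cont] .
  let ?s = "\<lambda>(M::nat) x. \<bar>u x - clampv (real M * l1n x) (u x)\<bar>"
  have sm: "?s M \<in> borel_measurable lebesgue" for M
    unfolding clampv_def using um lm by measurable
  have lim: "(\<lambda>M. ?s M x) \<longlonglongrightarrow> 0" for x
  proof (cases "l1n x = 0")
    case True
    then have "x = 0" by (rule l1n_zero)
    then show ?thesis using u0 by (simp add: clampv_def l1n_def)
  next
    case False
    then have lp: "l1n x > 0" using l1n_nonneg[of x] by simp
    obtain N :: nat where N: "\<bar>u x\<bar> / l1n x \<le> real N" using real_arch_simple by blast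
    have "\<forall>\<^sub>F M in sequentially. ?s M x = 0"
      unfolding eventually_sequentially
    proof (intro exI allI impI)
      fix M assume "N \<le> M"
      then have "\<bar>u x\<bar> / l1n x \<le> real M" using N by linarith
      then have "\<bar>u x\<bar> \<le> real M * l1n x" using lp by (simp add: divide_le_eq)
      then show "?s M x = 0" by (simp add: clampv_id)
    qed
    then show ?thesis by (rule tendsto_eventually)
  qed
  have a1: "(\<lambda>x. 0::real) \<in> borel_measurable lebesgue" by simp
  have a3: "integrable lebesgue (\<lambda>x. \<bar>u x\<bar>)" using u by auto
  have a4: "AE x in lebesgue. (\<lambda>M. ?s M x) \<longlonglongrightarrow> 0" using lim by auto
  have a5: "AE x in lebesgue. norm (?s M x) \<le> \<bar>u x\<bar>" for M
    using clampv_diff[OF mult_nonneg_nonneg[OF of_nat_0_le_iff l1n_nonneg]] by auto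
  note DC = integral_dominated_convergence[OF a1 sm a3 a4 a5]
  note DC2 = integrable_dominated_convergence2[OF a1 sm a3 a4 a5]
  have "(\<lambda>M. integral\<^sup>L lebesgue (?s M)) \<longlonglongrightarrow> integral\<^sup>L lebesgue (\<lambda>x. 0::real)"
    using DC by simp
  then have "(\<lambda>M. integral\<^sup>L lebesgue (?s M)) \<longlonglongrightarrow> 0" by simp
  then have "\<forall>\<^sub>F M in sequentially. integral\<^sup>L lebesgue (?s M) < e"
    using e by (rule order_tendstoD)
  then show ?thesis unfolding eventually_sequentially using DC2 by auto
qed

lemma clampv_scale: "c > 0 \<Longrightarrow> clampv (c * a) (c * v) = c * clampv a v"
  by (simp add: clampv_def max_mult_distrib_left min_mult_distrib_left)

lemma isD_clamp:
  assumes "isD h"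
  shows "isD (\<lambda>x. clampv (m * l1n x) (h x))"
proof -
  have a: "isD (\<lambda>x. m * l1n x)" by (rule isD_scale[OF isD_l1n])
  have "isD (\<lambda>x. max (- (m * l1n x)) (min (m * l1n x) (h x)))"
    by (rule isD_max[OF isD_neg[OF a] isD_min[OF a assms]])
  then show ?thesis unfolding clampv_def .
qed

theorem theorem2:
  fixes X :: "(real^'n) set" and f :: "real^'n \<Rightarrow> real" and \<epsilon> :: real
  assumes "X \<in> sets lebesgue" and "compact X"
    and "positive_homogeneous f"
    and "set_integrable lebesgue X f"
    and "\<epsilon> > 0"
  shows "\<exists>W1 Ws. homo_mlp_wf W1 Ws \<and> homo_mlp_width W1 Ws \<le> 2 * (CARD('n) + 4) \<and>
           set_integrable lebesgue X (\<lambda>x. \<bar>f x - homo_mlp_fun W1 Ws x\<bar>) \<and>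
           (LINT x:X|lebesgue. \<bar>f x - homo_mlp_fun W1 Ws x\<bar>) < \<epsilon>"
proof -
  note Xm = assms(1) and Xc = assms(2) and fh = assms(3) and fi = assms(4) and eps = assms(5)
  define u where "u x = indicator X x * f x" for x
  have ui: "integrable lebesgue u"
    using fi unfolding set_integrable_def u_def by simp
  have um: "u \<in> borel_measurable lebesgue" using ui by auto
  have f0: "f 0 = 0" using ph_zero[OF fh] .
  have u0: "u 0 = 0" unfolding u_def f0 by simp
  have uX: "\<And>x. x \<in> X \<Longrightarrow> u x = f x" unfolding u_def by simp
  have Xl: "X \<in> lmeasurable" using lmeasurable_compact[OF Xc] .
  have Xfin: "emeasure lebesgue X < \<infinity>" using fmeasurableD2[OF Xl] by (simp add: less_top)
  define mX where "mX = measure lebesgue X"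
  have mX0: "mX \<ge> 0" unfolding mX_def by simp
  obtain B where B: "\<And>x. x \<in> X \<Longrightarrow> l1n x \<le> B" and B0: "B \<ge> 0"
  proof -
    have "compact (l1n ` X)"
      by (rule compact_continuous_image[OF continuous_on_subset[OF l1n_cont] Xc]) simp
    then have "bounded (l1n ` X)" by (rule compact_imp_bounded)
    then obtain a where a: "\<forall>y\<in>l1n ` X. \<bar>y\<bar> \<le> a" unfolding bounded_real by blast
    show ?thesis by (rule that[of "max a 0"]) (use a in auto)
  qed
  have e3: "\<epsilon> / 3 > 0" using eps by simp
  obtain M :: nat where M: "integral\<^sup>L lebesgue (\<lambda>x. \<bar>u x - clampv (real M * l1n x) (u x)\<bar>) < \<epsilon> / 3"
    and Mi: "integrable lebesgue (\<lambda>x. \<bar>u x - clampv (real M * l1n x) (u x)\<bar>)"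
    using trunc[OF ui u0 e3] by blast
  define gM where "gM x = clampv (real M * l1n x) (u x)" for x
  define C where "C = 2 * real M * B"
  have C0: "C \<ge> 0" unfolding C_def using B0 by simp
  define \<delta> where "\<delta> = \<epsilon> / (3 * (C + 1))"
  have \<delta>0: "\<delta> > 0" unfolding \<delta>_def using eps C0 by simp
  obtain K where K: "closed K" "K \<subseteq> X" "emeasure lebesgue (X - K) < ennreal \<delta>" "continuous_on K u"
    using lusin[OF um Xm Xfin \<delta>0] by blast
  have Kc: "compact K"
  proof -
    have "compact (X \<inter> K)" by (rule compact_Int_closed[OF Xc K(1)])
    then show ?thesis using K(2) by (simp add: Int_absorb1)
  qed
  have fK: "continuous_on K f"
    using K(4) by (rule continuous_on_cong[THEN iffD1, rotated 2]) (use K(2) uX in auto)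
  define FM where "FM x = clampv (real M * l1n x) (f x)" for x
  have FMh: "positive_homogeneous FM"
    unfolding positive_homogeneous_def
  proof (intro allI impI)
    fix x and c :: real assume c: "c > 0"
    have "f (c *\<^sub>R x) = c * f x" using fh c unfolding positive_homogeneous_def by blast
    have "real M * l1n (c *\<^sub>R x) = c * (real M * l1n x)"
      using c by (simp add: l1n_hom)
    then have "FM (c *\<^sub>R x) = clampv (c * (real M * l1n x)) (c * f x)"
      unfolding FM_def using \<open>f (c *\<^sub>R x) = c * f x\<close> by (simp only:)
    then show "FM (c *\<^sub>R x) = c * FM x"
      unfolding FM_def using clampv_scale[OF c] by simp
  qed
  have FMc: "continuous_on K FM"
    unfolding FM_def clampv_def
    by (intro continuous_on_max continuous_on_min continuous_on_minus continuous_on_mult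
        continuous_on_const fK continuous_on_subset[OF l1n_cont]) auto
  define \<eta> where "\<eta> = \<epsilon> / (3 * (mX + 1))"
  have \<eta>0: "\<eta> > 0" unfolding \<eta>_def using eps mX0 by simp
  have "\<exists>h\<in>Collect isD. \<forall>x\<in>K. \<bar>h x - FM x\<bar> < \<eta>"
  proof (rule lattice_approx[OF Kc FMc])
    show "continuous_on K g" if "g \<in> Collect isD" for g
      using isD_cont[of g] that continuous_on_subset by blast
    show "(\<lambda>x. max (g x) (k x)) \<in> Collect isD" if "g \<in> Collect isD" "k \<in> Collect isD" for g k
      using isD_max that by auto
    show "(\<lambda>x. min (g x) (k x)) \<in> Collect isD" if "g \<in> Collect isD" "k \<in> Collect isD" for g k
      using isD_min that by auto
    show "\<exists>h\<in>Collect isD. h s = FM s \<and> h t = FM t" if "s \<in> K" "t \<in> K" for s t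
      using interp_D[OF FMh, of s t] by auto
    show "Collect isD \<noteq> {}" using isD_zero by auto
    show "\<eta> > 0" by (rule \<eta>0)
  qed
  then obtain h where h: "isD h" "\<And>x. x \<in> K \<Longrightarrow> \<bar>h x - FM x\<bar> < \<eta>" by auto
  define h' where "h' x = clampv (real M * l1n x) (h x)" for x
  have h'D: "isD h'" unfolding h'_def by (rule isD_clamp[OF h(1)])
  then obtain P Q where PQ: "P \<noteq> []" "Q \<noteq> []" "h' = dcf P Q" unfolding isD_def by blast
  obtain W1 Ws where W: "homo_mlp_wf W1 Ws" "homo_mlp_width W1 Ws \<le> 2 * (CARD('n) + 4)"
    "\<And>x. homo_mlp_fun W1 Ws x = dcf P Q x"
    using net_exists[OF PQ(1,2)] by blast
  have hom: "homo_mlp_fun W1 Ws = h'" using W(3) PQ(3) by auto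
  define \<phi> where "\<phi> x = indicator X x * \<bar>u x - h' x\<bar>" for x
  define \<psi> where "\<psi> x = \<bar>u x - gM x\<bar> + \<eta> * indicator K x + C * indicator (X - K) x" for x
  have eq\<phi>: "(\<lambda>x. indicator X x *\<^sub>R \<bar>f x - h' x\<bar>) = \<phi>"
    unfolding \<phi>_def by (auto simp: fun_eq_iff indicator_def uX)
  have Km: "K \<in> sets lebesgue" using K(1) by (simp add: borel_closed)
  have XKm: "X - K \<in> sets lebesgue" using Km Xm by auto
  have Kfin: "emeasure lebesgue K < \<infinity>"
    using emeasure_mono[OF K(2) Xm] Xfin by (simp add: order_le_less_trans)
  have XKfin: "emeasure lebesgue (X - K) < \<infinity>"
    using emeasure_mono[of "X - K" X lebesgue] Xm Xfin by (simp add: order_le_less_trans)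
  have \<psi>i: "integrable lebesgue \<psi>"
  proof -
    have i1: "integrable lebesgue (\<lambda>x. \<eta> * indicator K x)"
      by (rule integrable_mult_right) (rule integrable_real_indicator[OF Km Kfin])
    have i2: "integrable lebesgue (\<lambda>x. C * indicator (X - K) x)"
      by (rule integrable_mult_right) (rule integrable_real_indicator[OF XKm XKfin])
    show ?thesis unfolding \<psi>_def gM_def
      by (rule Bochner_Integration.integrable_add[OF Bochner_Integration.integrable_add[OF Mi i1] i2])
  qed
  have h'm: "h' \<in> borel_measurable lebesgue" using cont_meas_leb[OF isD_cont[OF h'D]] .
  have \<phi>m: "\<phi> \<in> borel_measurable lebesgue"
    unfolding \<phi>_def using um h'm Xm by measurable
  have bound: "\<phi> x \<le> \<psi> x" for x
  proof -
    have c0: "real M * l1n x \<ge> 0" by (simp add: l1n_nonneg)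
    have p1: "\<bar>u x - gM x\<bar> \<ge> 0" "\<eta> * indicator K x \<ge> 0" "C * indicator (X - K) x \<ge> 0"
      using \<eta>0 C0 by auto
    show ?thesis
    proof (cases "x \<in> X")
      case False then show ?thesis unfolding \<phi>_def \<psi>_def using p1 by simp
    next
      case xX: True
      have tri: "\<bar>u x - h' x\<bar> \<le> \<bar>u x - gM x\<bar> + \<bar>gM x - h' x\<bar>" by simp
      show ?thesis
      proof (cases "x \<in> K")
        case True
        have "gM x = FM x" unfolding gM_def FM_def using uX[OF xX] by simp
        moreover have "\<bar>FM x\<bar> \<le> real M * l1n x" unfolding FM_def by (rule clampv_bound[OF c0])
        ultimately have "\<bar>gM x - h' x\<bar> \<le> \<bar>h x - FM x\<bar>"
          unfolding h'_def using clampv_lip[of "FM x" "real M * l1n x" "h x"] by (simp add: abs_minus_commute)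
        also have "\<dots> < \<eta>" using h(2)[OF True] .
        finally show ?thesis unfolding \<phi>_def \<psi>_def using tri True xX by simp
      next
        case False
        have "\<bar>gM x\<bar> \<le> real M * l1n x" unfolding gM_def by (rule clampv_bound[OF c0])
        moreover have "\<bar>h' x\<bar> \<le> real M * l1n x" unfolding h'_def by (rule clampv_bound[OF c0])
        moreover have "real M * l1n x \<le> real M * B" using B[OF xX] by (simp add: mult_left_mono)
        ultimately have "\<bar>gM x - h' x\<bar> \<le> C" unfolding C_def by simp
        then show ?thesis unfolding \<phi>_def \<psi>_def using tri False xX by simp
      qed
    qed
  qed
  have \<phi>i: "integrable lebesgue \<phi>"
  proof (rule Bochner_Integration.integrable_bound[OF \<psi>i \<phi>m])
    show "AE x in lebesgue. norm (\<phi> x) \<le> norm (\<psi> x)"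
      using bound by (auto simp: \<phi>_def intro!: order_trans[OF _ abs_ge_self])
  qed
  have "integral\<^sup>L lebesgue \<phi> \<le> integral\<^sup>L lebesgue \<psi>"
    by (rule Bochner_Integration.integral_mono[OF \<phi>i \<psi>i bound])
  also have "integral\<^sup>L lebesgue \<psi> =
      integral\<^sup>L lebesgue (\<lambda>x. \<bar>u x - gM x\<bar>) + \<eta> * measure lebesgue K + C * measure lebesgue (X - K)"
    unfolding \<psi>_def gM_def using Mi Km XKm Kfin XKfin by (simp add: Bochner_Integration.integral_add)
  also have "\<dots> < \<epsilon>"
  proof -
    have "measure lebesgue K \<le> mX" unfolding mX_def
      using K(2) Xl by (intro measure_mono_fmeasurable) (auto simp: Km)
    then have "\<eta> * measure lebesgue K \<le> \<eta> * mX" using \<eta>0 by (simp add: mult_left_mono)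
    also have "\<eta> * mX \<le> \<epsilon> / 3"
      unfolding \<eta>_def using eps mX0 by (simp add: field_simps)
    finally have a: "\<eta> * measure lebesgue K \<le> \<epsilon> / 3" .
    have "measure lebesgue (X - K) < \<delta>"
      using K(3) XKfin emeasure_eq_ennreal_measure[of lebesgue "X - K"] \<delta>0
      by (simp add: ennreal_less_iff less_top[symmetric])
    then have "C * measure lebesgue (X - K) \<le> C * \<delta>" using C0 by (simp add: mult_left_mono)
    also have "C * \<delta> \<le> \<epsilon> / 3"
      unfolding \<delta>_def using eps C0 by (simp add: field_simps)
    finally have b: "C * measure lebesgue (X - K) \<le> \<epsilon> / 3" .
    have "integral\<^sup>L lebesgue (\<lambda>x. \<bar>u x - gM x\<bar>) < \<epsilon> / 3" using M unfolding gM_def .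
    with a b show ?thesis by linarith
  qed
  finally have lt: "integral\<^sup>L lebesgue \<phi> < \<epsilon>" .
  have "set_integrable lebesgue X (\<lambda>x. \<bar>f x - homo_mlp_fun W1 Ws x\<bar>)"
    unfolding set_integrable_def hom eq\<phi> by (rule \<phi>i)
  moreover have "(LINT x:X|lebesgue. \<bar>f x - homo_mlp_fun W1 Ws x\<bar>) < \<epsilon>"
    unfolding set_lebesgue_integral_def hom eq\<phi> by (rule lt)
  ultimately show ?thesis using W(1,2) by blast
qed


end
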